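(* Consider the statements: (i) there exists no scalable acceptable deal; (ii) $\mathcal L$ is a linear subspace of $\mathbb R^N$; (iii) $\mathcal L=\{0\}$. Then (iii) implies (i). If $\ker(V_1):=\{x\in\mathbb R^N: V_1(x)=0\}=\{0\}$, then (i) implies (iii). If $\mathcal A^\infty\cap(-\mathcal A^\infty)=\{0\}$, then (ii) implies (i).
   Context: Standing setup: Let $\mathcal{X}$ be a real topological vector space partially ordered by a convex cone $\mathcal{X}_+\subset\mathcal X$; write $X\ge Y$ iff $X-Y\in\mathcal X_+$. Fix $N\in\mathbb N$ and: a set $\mathcal P\subset\mathbb R^N$ with $0\in\mathcal P$; a function $V_0:\mathbb R^N\to\mathbb R$ with $V_0(0)=0$ and $V_0(x)\ge -V_0(-x)$ for all $x\in\mathbb R^N$; a map $V_1:\mathbb R^N\to\mathcal X$ with $V_1(0)=0$ and $V_1(x)\le -V_1(-x)$ for all $x\in\mathbb R^N$; a set $\mathcal A\subset\mathcal X$ with $0\in\mathcal A$ and $\mathcal A+\mathcal X_+\subset\mathcal A$. Asymptotic notions: for a nonempty set $C$ in a topological vector space, $C^\infty=\{X:\exists\text{ nets }(X_\alpha)\subset C,\ (\lambda_\alpha)\subset[0,\infty),\ \lambda_\alpha\to0,\ \lambda_\alpha X_\alpha\to X\}$. For $f:\mathbb R^N\to\mathbb R$, its asymptotic function $f^\infty:\mathbb R^N\to[-\infty,\infty]$ is the function whose epigraph $\{(x,m)\in\mathbb R^N\times\mathbb R: f^\infty(x)\le m\}$ equals $(\operatorname{epi}f)^\infty$, where $\operatorname{epi}f=\{(x,m)\in\mathbb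 R^N\times\mathbb R: f(x)\le m\}$. A portfolio $x\in\mathbb R^N$ is a scalable acceptable deal if $x\in\mathcal P^\infty$, $V_0^\infty(x)\le0$ and $V_1(x)\in\mathcal A^\infty\setminus\{0\}$. Define $\mathcal L=\{x\in\mathcal P^\infty: V_0^\infty(x)\le0,\ V_1(x)\in\mathcal A^\infty\}$. *)

theory Defs
  imports "HOL-Analysis.Analysis"
begin

text \<open>A net (X_alpha, lambda_alpha) indexed by a directed set is represented by the
  (proper) filter it induces on the product real x 'a of pairs (lambda_alpha, X_alpha).\<close>
definition asym_cone :: "'a::{real_vector,topological_space} set \<Rightarrow> 'a set" where
  "asym_cone C = {X. \<exists>F :: (real \<times> 'a) filter. F \<noteq> bot \<and>
      (\<forall>\<^sub>F p in F. snd p \<in> C \<and> fst p \<ge> 0) \<and>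
      (fst \<longlongrightarrow> 0) F \<and>
      ((\<lambda>p. fst p *\<^sub>R snd p) \<longlongrightarrow> X) F}"

definition epi :: "('a \<Rightarrow> real) \<Rightarrow> ('a \<times> real) set" where
  "epi f = {(x, m). f x \<le> m}"

definition asym_fun :: "(real^'n \<Rightarrow> real) \<Rightarrow> real^'n \<Rightarrow> ereal" where
  "asym_fun f x = Inf {ereal m | m. (x, m) \<in> asym_cone (epi f)}"

definition scalable_acceptable_deal ::
  "(real^'n) set \<Rightarrow> (real^'n \<Rightarrow> real) \<Rightarrow> (real^'n \<Rightarrow> 'x::{real_vector,topological_space})
     \<Rightarrow> 'x set \<Rightarrow> real^'n \<Rightarrow> bool" where
  "scalable_acceptable_deal P V0 V1 A x \<longleftrightarrow>
     x \<in> asym_cone P \<and> asym_fun V0 x \<le> 0 \<and> V1 x \<in> asym_cone A - {0}"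

definition L_set ::
  "(real^'n) set \<Rightarrow> (real^'n \<Rightarrow> real) \<Rightarrow> (real^'n \<Rightarrow> 'x::{real_vector,topological_space})
     \<Rightarrow> 'x set \<Rightarrow> (real^'n) set" where
  "L_set P V0 V1 A = {x \<in> asym_cone P. asym_fun V0 x \<le> 0 \<and> V1 x \<in> asym_cone A}"

end

theory Submission
  imports Defs
begin

lemma asym_principal:
  fixes C :: "'a::{real_vector,topological_space} set"
  assumes "c \<in> C" shows "0 \<in> asym_cone C"
proof -
  let ?F = "principal {(0::real, c)}"
  have "?F \<noteq> bot" by (simp add: principal_eq_bot_iff)
  moreover have "\<forall>\<^sub>F p in ?F. snd p \<in> C \<and> fst p \<ge> 0" using assms by (simp add: eventually_principal)
  moreover have "(fst \<longlongrightarrow> 0) ?F"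
    by (rule tendsto_eventually) (simp add: eventually_principal)
  moreover have "((\<lambda>p. fst p *\<^sub>R snd p) \<longlongrightarrow> 0) ?F"
    by (rule tendsto_eventually) (simp add: eventually_principal)
  ultimately show ?thesis unfolding asym_cone_def by blast
qed

lemma asym_shift:
  fixes A Xp :: "'x::{real_vector,topological_space} set"
  assumes add: "continuous_on UNIV (\<lambda>p::'x \<times> 'x. fst p + snd p)"
    and cone: "cone Xp" and mono: "\<And>a k. a \<in> A \<Longrightarrow> k \<in> Xp \<Longrightarrow> a + k \<in> A"
    and A0: "0 \<in> A"
    and a: "a \<in> asym_cone A" and k: "k \<in> Xp"
  shows "a + k \<in> asym_cone A"
proof -
  obtain F where F: "F \<noteq> bot" "\<forall>\<^sub>F p in F. snd p \<in> A \<and> fst p \<ge> 0"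
    "(fst \<longlongrightarrow> 0) F" "((\<lambda>p. fst p *\<^sub>R snd p) \<longlongrightarrow> a) F"
    using a unfolding asym_cone_def by blast
  define h where "h = (\<lambda>(q::(real\<times>'x)\<times>real). if fst (fst q) > 0
      then (fst (fst q), snd (fst q) + (1 / fst (fst q)) *\<^sub>R k) else (snd q, (1 / snd q) *\<^sub>R k))"
  define H where "H = F \<times>\<^sub>F at_right (0::real)"
  define G where "G = filtermap h H"
  have Hnb: "H \<noteq> bot" unfolding H_def using F(1) by (simp add: prod_filter_eq_bot)
  have evH: "\<forall>\<^sub>F q in H. snd (fst q) \<in> A \<and> fst (fst q) \<ge> 0 \<and> snd q > 0"
    unfolding H_def eventually_prod_filter
    using F(2) eventually_at_right_less[of "0::real"] by (intro exI[of _ "\<lambda>p. snd p \<in> A \<and> fst p \<ge> 0"] exI[of _ "\<lambda>t. 0 < t"]) auto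
  have "G \<noteq> bot" unfolding G_def using Hnb by (simp add: filtermap_bot_iff)
  moreover have "\<forall>\<^sub>F p in G. snd p \<in> A \<and> fst p \<ge> 0"
    unfolding G_def eventually_filtermap
  proof (rule eventually_mono[OF evH])
    fix q :: "(real\<times>'x)\<times>real" assume q: "snd (fst q) \<in> A \<and> fst (fst q) \<ge> 0 \<and> snd q > 0"
    show "snd (h q) \<in> A \<and> fst (h q) \<ge> 0"
    proof (cases "fst (fst q) > 0")
      case True
      have "(1 / fst (fst q)) *\<^sub>R k \<in> Xp" using cone k True unfolding cone_def by simp
      then show ?thesis using True q mono unfolding h_def by auto
    next
      case False
      have "(1 / snd q) *\<^sub>R k \<in> Xp" using cone k q unfolding cone_def by simp
      then show ?thesis using False q mono[OF A0] unfolding h_def by force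
    qed
  qed
  moreover have "(fst \<longlongrightarrow> 0) G"
    unfolding G_def filterlim_filtermap
  proof (rule tendsto_sandwich[where f="\<lambda>_. 0" and h="\<lambda>q. fst (fst q) + snd q"])
    show "\<forall>\<^sub>F q in H. 0 \<le> fst (h q)"
      by (rule eventually_mono[OF evH]) (auto simp: h_def)
    show "\<forall>\<^sub>F q in H. fst (h q) \<le> fst (fst q) + snd q"
      by (rule eventually_mono[OF evH]) (auto simp: h_def)
    show "((\<lambda>_. 0::real) \<longlongrightarrow> 0) H" by simp
    have "((\<lambda>q. fst (fst q)) \<longlongrightarrow> 0) H"
      unfolding H_def using filterlim_compose[OF F(3) filterlim_fst, of "at_right 0"] by simp
    moreover have "(snd \<longlongrightarrow> 0) H"
      unfolding H_def using filterlim_compose[OF tendsto_ident_at[of "0::real" "{0<..}"] filterlim_snd[of "at_right (0::real)" F]] by simp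
    ultimately show "((\<lambda>q. fst (fst q) + snd q) \<longlongrightarrow> 0) H"
      using tendsto_add[of "\<lambda>q. fst (fst q)" 0 H snd 0] by simp
  qed
  moreover have "((\<lambda>p. fst p *\<^sub>R snd p) \<longlongrightarrow> a + k) G"
    unfolding G_def filterlim_filtermap
  proof -
    have t1: "((\<lambda>q. fst (fst q) *\<^sub>R snd (fst q)) \<longlongrightarrow> a) H"
      unfolding H_def using filterlim_compose[OF F(4) filterlim_fst, of "at_right 0"] by simp
    have t2: "((\<lambda>q. (fst (fst q) *\<^sub>R snd (fst q), k)) \<longlongrightarrow> (a, k)) H"
      by (intro tendsto_Pair t1 tendsto_const)
    have t3: "((\<lambda>q. fst (fst q) *\<^sub>R snd (fst q) + k) \<longlongrightarrow> a + k) H"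
      using continuous_on_tendsto_compose[OF add t2] by (simp add: o_def)
    show "((\<lambda>x. fst (h x) *\<^sub>R snd (h x)) \<longlongrightarrow> a + k) H"
    proof (rule Lim_transform_eventually[OF t3])
      show "\<forall>\<^sub>F q in H. fst (fst q) *\<^sub>R snd (fst q) + k = fst (h q) *\<^sub>R snd (h q)"
        by (rule eventually_mono[OF evH]) (auto simp: h_def scaleR_add_right)
    qed
  qed
  ultimately show ?thesis unfolding asym_cone_def by blast
qed


theorem mainTheorem7:
  fixes Xp :: "'x::{real_vector,topological_space} set"
    and P :: "(real^'n) set"
    and V0 :: "real^'n \<Rightarrow> real"
    and V1 :: "real^'n \<Rightarrow> 'x"
    and A :: "'x set"
  assumes tvs_add: "continuous_on UNIV (\<lambda>p::'x \<times> 'x. fst p + snd p)"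
    and tvs_smult: "continuous_on UNIV (\<lambda>p::real \<times> 'x. fst p *\<^sub>R snd p)"
    and Xp_convex: "convex Xp" and Xp_cone: "cone Xp" and Xp_zero: "0 \<in> Xp"
    and Xp_pointed: "Xp \<inter> uminus ` Xp = {0}"
    and P0: "0 \<in> P"
    and V00: "V0 0 = 0" and V0_ineq: "\<And>x. V0 x \<ge> - V0 (- x)"
    and V10: "V1 0 = 0" and V1_ineq: "\<And>x. - V1 (- x) - V1 x \<in> Xp"
    and A0: "0 \<in> A" and A_mono: "\<And>a k. a \<in> A \<Longrightarrow> k \<in> Xp \<Longrightarrow> a + k \<in> A"
  shows "(L_set P V0 V1 A = {0} \<longrightarrow> \<not> (\<exists>x. scalable_acceptable_deal P V0 V1 A x))
       \<and> ({x. V1 x = 0} = {0} \<longrightarrow>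
            (\<not> (\<exists>x. scalable_acceptable_deal P V0 V1 A x)) \<longrightarrow> L_set P V0 V1 A = {0})
       \<and> (asym_cone A \<inter> uminus ` asym_cone A = {0} \<longrightarrow>
            subspace (L_set P V0 V1 A) \<longrightarrow> \<not> (\<exists>x. scalable_acceptable_deal P V0 V1 A x))"
proof (intro conjI impI)
  have z0: "0 \<in> L_set P V0 V1 A"
  proof -
    have "0 \<in> asym_cone P" using asym_principal[OF P0] .
    moreover have "(0, 0) \<in> asym_cone (epi V0)"
      using asym_principal[of "(0,0)" "epi V0"] V00 by (simp add: epi_def zero_prod_def)
    hence "asym_fun V0 0 \<le> 0" unfolding asym_fun_def
      by (metis (mono_tags, lifting) Inf_lower mem_Collect_eq zero_ereal_def)
    moreover have "V1 0 \<in> asym_cone A" using asym_principal[OF A0] V10 by simp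
    ultimately show ?thesis unfolding L_set_def by simp
  qed
  have sadL: "scalable_acceptable_deal P V0 V1 A x \<Longrightarrow> x \<in> L_set P V0 V1 A \<and> V1 x \<noteq> 0" for x
    unfolding scalable_acceptable_deal_def L_set_def by auto
  show "\<not> (\<exists>x. scalable_acceptable_deal P V0 V1 A x)" if "L_set P V0 V1 A = {0}"
    using sadL that V10 by fastforce
  show "L_set P V0 V1 A = {0}" if k: "{x. V1 x = 0} = {0}" and n: "\<not> (\<exists>x. scalable_acceptable_deal P V0 V1 A x)"
  proof -
    have "x = 0" if "x \<in> L_set P V0 V1 A" for x
    proof (rule ccontr)
      assume "x \<noteq> 0"
      hence "V1 x \<noteq> 0" using k by blast
      hence "scalable_acceptable_deal P V0 V1 A x" using that
        unfolding scalable_acceptable_deal_def L_set_def by auto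
      thus False using n by blast
    qed
    thus ?thesis using z0 by blast
  qed
  show "\<not> (\<exists>x. scalable_acceptable_deal P V0 V1 A x)"
    if c: "asym_cone A \<inter> uminus ` asym_cone A = {0}" and s: "subspace (L_set P V0 V1 A)"
  proof
    assume "\<exists>x. scalable_acceptable_deal P V0 V1 A x"
    then obtain x where x: "x \<in> L_set P V0 V1 A" "V1 x \<noteq> 0" using sadL by blast
    have "- x \<in> L_set P V0 V1 A" using subspace_neg[OF s x(1)] .
    hence "V1 (- x) \<in> asym_cone A" unfolding L_set_def by simp
    from asym_shift[OF tvs_add Xp_cone A_mono A0 this V1_ineq[of x]]
    have "- V1 x \<in> asym_cone A" by simp
    hence "V1 x \<in> uminus ` asym_cone A" by (metis image_eqI minus_minus)
    moreover have "V1 x \<in> asym_cone A" using x(1) unfolding L_set_def by simp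
    ultimately show False using c x(2) by blast
  qed
qed

end
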